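(* Assume $B$ is non-decreasing and unbounded. Then $H$ is local $\delta$-admissible on $\mathcal{X}$ with $\delta(t)=1/\sqrt{B(t)}$; that is, for every $\varepsilon>0$ there exist $\eta>0$ and $t_0(\varepsilon)$ such that for all $t\in\mathcal{X}$ with $t>t_0(\varepsilon)$ and all complex $w$ with $|w|\le\eta/\sqrt{B(t)}$, \[ \log\frac{H(t+w)}{H(t)}=wA(t)+\tfrac12w^2B(t)+h_t(w),\qquad |h_t(w)|\le\varepsilon|w|^2B(t). \]
   Context: Let $G(z)=\sum_{n\ge0}a_n^2z^n$ be an entire function with $a_n\ge0$, infinitely many non-zero. Put $H(t)=G(e^t)$, $A=H'/H$, $B=A'$. Choose points $t_\ell\uparrow\infty$ with $B(t_\ell)=\ell^6$ (for all $\ell$ for which this is possible) and $T_\ell=[t_\ell,t_{\ell+1}]$; $T_\ell$ is long if $t_{\ell+1}-t_\ell\ge8/\ell^2$, with interior $\mathring T_\ell=[t_\ell+2/\ell^2,\,t_{\ell+1}-2/\ell^2]$. The set of normal values is $\mathcal{X}=\bigcup_{T_\ell\text{ long}}\mathring T_\ell$. The logarithm is the branch analytic in $w$ and vanishing at $w=0$. *)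

theory Defs
  imports "HOL-Analysis.Analysis"
begin

definition Gc :: "(nat \<Rightarrow> real) \<Rightarrow> complex \<Rightarrow> complex" where
  "Gc a z = (\<Sum>n. complex_of_real ((a n)^2) * z ^ n)"

definition Gr :: "(nat \<Rightarrow> real) \<Rightarrow> real \<Rightarrow> real" where
  "Gr a x = (\<Sum>n. (a n)^2 * x ^ n)"

definition Hr :: "(nat \<Rightarrow> real) \<Rightarrow> real \<Rightarrow> real" where
  "Hr a t = Gr a (exp t)"

definition Hc :: "(nat \<Rightarrow> real) \<Rightarrow> complex \<Rightarrow> complex" where
  "Hc a s = Gc a (exp s)"

definition Afun :: "(nat \<Rightarrow> real) \<Rightarrow> real \<Rightarrow> real" where
  "Afun a t = deriv (Hr a) t / Hr a t"

definition Bfun :: "(nat \<Rightarrow> real) \<Rightarrow> real \<Rightarrow> real" where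
  "Bfun a t = deriv (Afun a) t"

definition admissible_indices :: "(nat \<Rightarrow> real) \<Rightarrow> nat set" where
  "admissible_indices a = {l. 1 \<le> l \<and> (\<exists>t. Bfun a t = real l ^ 6)}"

text \<open>Set of normal values X: union of interiors of long intervals T_l = [t_l, t_(l+1)].\<close>
definition normal_values :: "(nat \<Rightarrow> real) \<Rightarrow> (nat \<Rightarrow> real) \<Rightarrow> real set" where
  "normal_values a ts = \<Union> {{ts l + 2 / (real l)^2 .. ts (Suc l) - 2 / (real l)^2} | l.
      l \<in> admissible_indices a \<and> Suc l \<in> admissible_indices a \<and>
      ts (Suc l) - ts l \<ge> 8 / (real l)^2}"

end

theory Submission
  imports Defs
begin


definition Sser :: "(nat \<Rightarrow> real) \<Rightarrow> real \<Rightarrow> real" where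
  "Sser c t = (\<Sum>n. c n * exp t ^ n)"

lemma summable_nc:
  fixes c :: "nat \<Rightarrow> real"
  assumes "\<And>y::real. summable (\<lambda>n. c n * y^n)"
  shows "summable (\<lambda>n. (real n * c n) * y^n)"
proof -
  have "summable (\<lambda>n. diffs c n * y^n)" by (rule termdiff_converges_all[OF assms])
  hence "summable (\<lambda>n. (diffs c n * y^n) * y)" by (rule summable_mult2)
  moreover have "(\<lambda>n. (diffs c n * y^n) * y) = (\<lambda>n. (real (Suc n) * c (Suc n)) * y^(Suc n))"
    by (auto simp: diffs_def algebra_simps)
  ultimately show ?thesis using summable_Suc_iff[of "\<lambda>n. (real n * c n) * y^n"] by simp
qed

lemma Sser_deriv:
  fixes c :: "nat \<Rightarrow> real"
  assumes sc: "\<And>y::real. summable (\<lambda>n. c n * y^n)"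
  shows "(Sser c has_real_derivative Sser (\<lambda>n. real n * c n) t) (at t)"
proof -
  let ?G = "\<lambda>x::real. \<Sum>n. c n * x^n"
  have dG: "(?G has_real_derivative (\<Sum>n. diffs c n * exp t ^ n)) (at (exp t))"
    by (rule termdiffs_strong_converges_everywhere[OF sc])
  have d: "((\<lambda>t. ?G (exp t)) has_real_derivative (\<Sum>n. diffs c n * exp t ^ n) * exp t) (at t)"
    using DERIV_chain2[OF dG DERIV_exp] .
  let ?f = "\<lambda>n. (real n * c n) * exp t ^ n"
  have sd: "summable (\<lambda>n. diffs c n * exp t ^ n)" by (rule termdiff_converges_all[OF sc])
  have eq: "(\<lambda>n. ?f (Suc n)) = (\<lambda>n. (diffs c n * exp t ^ n) * exp t)"
    by (auto simp: diffs_def algebra_simps)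
  have sf: "summable ?f" by (rule summable_nc[OF sc])
  have "(\<Sum>n. ?f (Suc n)) = suminf ?f - ?f 0" using suminf_split_head[OF sf] .
  hence "(\<Sum>n. (diffs c n * exp t ^ n) * exp t) = suminf ?f" unfolding eq by simp
  moreover have "(\<Sum>n. (diffs c n * exp t ^ n) * exp t) = (\<Sum>n. diffs c n * exp t ^ n) * exp t"
    using suminf_mult2[OF sd] by simp
  ultimately have "(\<Sum>n. diffs c n * exp t ^ n) * exp t = Sser (\<lambda>n. real n * c n) t"
    unfolding Sser_def by simp
  moreover have "Sser c = (\<lambda>t. ?G (exp t))" by (auto simp: Sser_def fun_eq_iff)
  ultimately show ?thesis using d by simp
qed

lemma exp_taylor3:
  fixes z :: complex
  shows "norm (exp z - 1 - z - z^2/2) \<le> norm z ^ 3 * exp (norm z)"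
proof -
  have e: "exp z = (\<Sum>n<3. inverse(fact n) *\<^sub>R (z ^ n)) + (\<Sum>n. inverse(fact (n + 3)) *\<^sub>R (z ^ (n + 3)))"
    by (rule exp_first_terms)
  have "(\<Sum>n<3. inverse(fact n) *\<^sub>R (z ^ n)) = 1 + z + z^2/2"
    by (simp add: eval_nat_numeral scaleR_conv_of_real field_simps)
  hence eq: "exp z - 1 - z - z^2/2 = (\<Sum>n. inverse(fact (n + 3)) *\<^sub>R (z ^ (n + 3)))"
    using e by simp
  let ?g = "\<lambda>n. norm z ^ 3 * (norm z ^ n /\<^sub>R fact n)"
  have gs: "?g sums (norm z ^ 3 * exp (norm z))"
    by (intro sums_mult exp_converges)
  have "norm (\<Sum>n. inverse(fact (n + 3)) *\<^sub>R (z ^ (n + 3))) \<le> suminf ?g"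
  proof (rule norm_suminf_le)
    fix n
    have "fact n \<le> (fact (n+3) :: real)" by (intro fact_mono) auto
    hence "inverse (fact (n+3)) \<le> (inverse (fact n) :: real)"
      by (intro le_imp_inverse_le) auto
    hence "inverse (fact (n+3)) * (norm z ^ 3 * norm z ^ n) \<le> (inverse (fact n) :: real) * (norm z ^ 3 * norm z ^ n)"
      by (intro mult_right_mono) auto
    thus "norm (inverse(fact (n + 3)) *\<^sub>R (z ^ (n + 3))) \<le> ?g n"
      by (simp add: norm_power norm_mult power_add field_simps)
  next
    show "summable ?g" using gs by (rule sums_summable)
  qed
  thus ?thesis using eq gs sums_unique by metis
qed


lemma mvt_between:
  assumes d: "\<And>x. (f has_real_derivative f' x) (at x)"
  shows "\<exists>\<xi>. min 0 s \<le> \<xi> \<and> \<xi> \<le> max 0 s \<and> f s - f 0 = s * f' \<xi>"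
proof (cases "s = 0")
  case True thus ?thesis by auto
next
  case False
  show ?thesis
  proof (cases "s > 0")
    case True
    from MVT2[OF True, of f f'] d obtain z where "0 < z" "z < s" "f s - f 0 = (s - 0) * f' z" by blast
    thus ?thesis using True by (intro exI[of _ z]) auto
  next
    case nf: False
    with False have "s < 0" by auto
    from MVT2[OF this, of f f'] d obtain z where "s < z" "z < 0" "f 0 - f s = (0 - s) * f' z" by blast
    thus ?thesis using \<open>s < 0\<close> by (intro exI[of _ z]) (auto simp: algebra_simps)
  qed
qed

lemma taylor2_le:
  fixes F F1 F2 :: "real \<Rightarrow> real"
  assumes d1: "\<And>x. (F has_real_derivative F1 x) (at x)"
    and d2: "\<And>x. (F1 has_real_derivative F2 x) (at x)"
    and M: "\<And>x. min 0 s \<le> x \<Longrightarrow> x \<le> max 0 s \<Longrightarrow> F2 x \<le> M" and M0: "0 \<le> M"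
  shows "F s - F 0 - s * F1 0 \<le> M * s^2"
proof -
  define g where "g = (\<lambda>x. F x - x * F1 0)"
  have dg: "(g has_real_derivative (F1 x - F1 0)) (at x)" for x
    unfolding g_def by (auto intro!: derivative_eq_intros d1)
  obtain \<xi> where \<xi>: "min 0 s \<le> \<xi>" "\<xi> \<le> max 0 s" "g s - g 0 = s * (F1 \<xi> - F1 0)"
    using mvt_between[of g "\<lambda>x. F1 x - F1 0" s, OF dg] by blast
  obtain \<zeta> where \<zeta>: "min 0 \<xi> \<le> \<zeta>" "\<zeta> \<le> max 0 \<xi>" "F1 \<xi> - F1 0 = \<xi> * F2 \<zeta>"
    using mvt_between[of F1 F2 \<xi>, OF d2] by blast
  have z1: "min 0 s \<le> \<zeta>" "\<zeta> \<le> max 0 s" using \<xi> \<zeta> by auto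
  have q0: "0 \<le> s * \<xi>" and q1: "s * \<xi> \<le> s^2"
    using \<xi> by (auto simp: power2_eq_square min_def max_def split: if_splits intro: mult_nonneg_nonneg mult_nonpos_nonpos mult_left_mono mult_left_mono_neg)
  have "F s - F 0 - s * F1 0 = (s * \<xi>) * F2 \<zeta>" using \<xi>(3) \<zeta>(3) unfolding g_def by (simp add: algebra_simps)
  also have "\<dots> \<le> (s * \<xi>) * M" using M[OF z1] q0 by (intro mult_left_mono) auto
  also have "\<dots> \<le> s^2 * M" using q1 M0 by (intro mult_right_mono) auto
  finally show ?thesis by (simp add: mult.commute)
qed

lemma cube_exp_le:
  fixes y :: real assumes "0 \<le> y"
  shows "y^3 * exp (y/2) \<le> 216 * exp y"
proof -
  have "y/6 \<le> exp (y/6)" using exp_ge_add_one_self[of "y/6"] by linarith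
  hence "(y/6)^3 \<le> exp (y/6) ^ 3" using assms by (intro power_mono) auto
  also have "exp (y/6) ^ 3 = exp (y/2)" by (simp add: exp_of_nat_mult[symmetric])
  finally have "y^3 \<le> 216 * exp (y/2)" by (simp add: power_divide)
  hence "y^3 * exp (y/2) \<le> 216 * exp (y/2) * exp (y/2)" by (intro mult_right_mono) auto
  also have "\<dots> = 216 * exp y" by (simp add: exp_add[symmetric])
  finally show ?thesis .
qed

lemma cubic_bound:
  fixes u y \<eta> :: real
  assumes "0 \<le> u" "u \<le> \<eta>" "\<eta> \<le> 1/2" "0 \<le> y"
  shows "(u*y)^3 * exp (u*y) \<le> \<eta> * u^2 * (216 * exp y)"
proof -
  have "(u*y)^3 = u^2 * u * y^3" by (simp add: power_mult_distrib eval_nat_numeral)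
  also have "\<dots> \<le> u^2 * \<eta> * y^3" using assms by (intro mult_right_mono mult_left_mono) auto
  finally have a: "(u*y)^3 \<le> u^2 * \<eta> * y^3" .
  have "u*y \<le> (1/2)*y" using assms by (intro mult_right_mono) auto
  hence b: "exp (u*y) \<le> exp (y/2)" by simp
  have "(u*y)^3 * exp (u*y) \<le> (u^2 * \<eta> * y^3) * exp (y/2)"
    using a b assms by (intro mult_mono) auto
  also have "\<dots> = u^2 * \<eta> * (y^3 * exp (y/2))" by simp
  also have "\<dots> \<le> u^2 * \<eta> * (216 * exp y)"
    using cube_exp_le[OF assms(4)] assms by (intro mult_left_mono) auto
  finally show ?thesis by (simp add: mult_ac)
qed

lemma G_holo:
  fixes cc :: "nat \<Rightarrow> complex"
  assumes "\<And>z. summable (\<lambda>n. cc n * z^n)"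
  shows "(\<lambda>z. \<Sum>n. cc n * z^n) holomorphic_on UNIV"
  unfolding holomorphic_on_def field_differentiable_def
  using termdiffs_strong_converges_everywhere[OF assms] has_field_derivative_at_within by blast



lemma final_alg:
  fixes v R D :: complex and q \<eta> C :: real
  assumes "R = v - D" "norm D = q/2" "norm R \<le> C*\<eta>*q" "0 \<le> q" "q \<le> \<eta>^2" "0<\<eta>" "\<eta> \<le> 1/2"
    "C*\<eta> \<le> 1/2" "0 \<le> C"
  shows "norm (ln (1+v) - D) \<le> (C+1)*\<eta>*q" and "norm v \<le> 1/4"
proof -
  have "norm v \<le> norm D + norm R" using assms(1) norm_triangle_ineq[of D R] by simp
  also have "\<dots> \<le> q/2 + q/2" using assms(2,3,4,8) mult_right_mono[OF assms(8) assms(4)] by simp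
  finally have nv: "norm v \<le> q" by simp
  have "\<eta>^2 \<le> (1/2)^2" using assms by (intro power_mono) auto
  hence q4: "q \<le> 1/4" using assms(5) by (simp add: power_divide)
  thus "norm v \<le> 1/4" using nv by simp
  have "norm (ln (1+v) - v) \<le> norm v ^ 2 / (1 - norm v)" using nv q4 by (intro Ln_approx_linear) auto
  also have "\<dots> \<le> q^2 / (3/4)" using nv q4 by (intro frac_le power_mono) auto
  also have "\<dots> \<le> 2 * (q * q)" using assms(4) by (simp add: power2_eq_square)
  also have "\<dots> \<le> 2 * (\<eta>^2 * q)" using assms(4,5) by (intro mult_left_mono mult_right_mono) auto
  also have "\<dots> = (2*\<eta>) * (\<eta> * q)" by (simp add: power2_eq_square)
  also have "\<dots> \<le> 1 * (\<eta> * q)" using assms by (intro mult_right_mono) auto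
  finally have a: "norm (ln (1+v) - v) \<le> \<eta> * q" by simp
  have "norm (ln (1+v) - D) \<le> norm (ln (1+v) - v) + norm R"
    using assms(1) norm_triangle_ineq[of "ln (1+v) - v" R] by simp
  also have "\<dots> \<le> \<eta> * q + C*\<eta>*q" using a assms(3) by simp
  finally show "norm (ln (1+v) - D) \<le> (C+1)*\<eta>*q" by (simp add: algebra_simps)
qed

lemma local_est:
  fixes c :: "nat \<Rightarrow> real" and t A B \<eta> C :: real
  assumes cnn: "\<And>n. c n \<ge> 0"
    and sc: "\<And>y::real. summable (\<lambda>n. c n * y^n)"
    and scc: "\<And>z::complex. summable (\<lambda>n. complex_of_real (c n) * z^n)"
    and H0pos: "Sser c t > 0"
    and Adef: "A = Sser (\<lambda>n. real n * c n) t / Sser c t"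
    and Bdef: "B = Sser (\<lambda>n. real n * (real n * c n)) t / Sser c t - A^2"
    and Bpos: "B > 0"
    and mgf: "\<And>s. \<bar>s\<bar> \<le> 1 / sqrt B \<Longrightarrow> Sser c (t+s) / Sser c t * exp (-(s*A)) \<le> exp 64"
    and Cdef: "C = 432 * exp 64"
    and eta: "0 < \<eta>" "\<eta> \<le> 1/2" "C * \<eta> \<le> 1/2"
  shows "\<exists>L. L holomorphic_on cball 0 (\<eta> / sqrt B) \<and> L 0 = 0 \<and>
      (\<forall>w \<in> cball 0 (\<eta> / sqrt B).
         exp (L w) = (\<Sum>n. complex_of_real (c n) * exp (complex_of_real t + w) ^ n)
                   / (\<Sum>n. complex_of_real (c n) * exp (complex_of_real t) ^ n) \<and>
         cmod (L w - (w * complex_of_real A + w^2 * complex_of_real B / 2))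
           \<le> (C+1) * \<eta> * (cmod w)^2 * B)"
proof -
  define H0 where "H0 = Sser c t"
  define E where "E = exp t"
  define p where "p = (\<lambda>n. c n * E^n / H0)"
  define c1 where "c1 = (\<lambda>n. real n * c n)"
  define c2 where "c2 = (\<lambda>n. real n * c1 n)"
  have sc1: "\<And>y::real. summable (\<lambda>n. c1 n * y^n)" unfolding c1_def by (rule summable_nc[OF sc])
  have sc2: "\<And>y::real. summable (\<lambda>n. c2 n * y^n)" unfolding c2_def by (rule summable_nc[OF sc1])
  have H0p: "H0 > 0" using H0pos H0_def by simp
  have pnn: "p n \<ge> 0" for n using cnn H0p by (auto simp: p_def E_def)
  have s0: "(\<lambda>n. c n * E^n) sums H0" unfolding H0_def Sser_def E_def using sc by (rule summable_sums)
  have s1: "(\<lambda>n. c1 n * E^n) sums Sser c1 t" unfolding Sser_def E_def using sc1 by (rule summable_sums)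
  have s2: "(\<lambda>n. c2 n * E^n) sums Sser c2 t" unfolding Sser_def E_def using sc2 by (rule summable_sums)
  have P0: "p sums 1" using sums_divide[OF s0, of H0] H0p unfolding p_def by simp
  have P1: "(\<lambda>n. p n * real n) sums A"
  proof -
    have "(\<lambda>n. c1 n * E^n / H0) sums (Sser c1 t / H0)" by (rule sums_divide[OF s1])
    moreover have "(\<lambda>n. c1 n * E^n / H0) = (\<lambda>n. p n * real n)" by (auto simp: p_def c1_def)
    ultimately show ?thesis using Adef H0_def c1_def by simp
  qed
  have P2: "(\<lambda>n. p n * real n ^ 2) sums (Sser c2 t / H0)"
  proof -
    have "(\<lambda>n. c2 n * E^n / H0) sums (Sser c2 t / H0)" by (rule sums_divide[OF s2])
    moreover have "(\<lambda>n. c2 n * E^n / H0) = (\<lambda>n. p n * real n ^ 2)"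
      by (auto simp: p_def c1_def c2_def power2_eq_square)
    ultimately show ?thesis by simp
  qed
  have PZ: "(\<lambda>n. p n * (real n - A)) sums 0"
  proof -
    have "(\<lambda>n. p n * real n - A * p n) sums (A - A * 1)" by (intro sums_diff sums_mult P1 P0)
    thus ?thesis by (simp add: algebra_simps)
  qed
  have PV: "(\<lambda>n. p n * (real n - A)^2) sums B"
  proof -
    have "(\<lambda>n. p n * real n ^ 2 - (2*A) * (p n * real n) + A^2 * p n) sums (Sser c2 t / H0 - (2*A) * A + A^2 * 1)"
      by (intro sums_add sums_diff sums_mult P0 P1 P2)
    moreover have "Sser c2 t / H0 - (2*A) * A + A^2 * 1 = B"
      using Bdef H0_def c1_def c2_def by (simp add: power2_eq_square)
    ultimately show ?thesis by (simp add: power2_eq_square algebra_simps)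
  qed
  have PM: "(\<lambda>n. p n * exp (s * (real n - A))) sums (Sser c (t+s) / H0 * exp (-(s*A)))" for s
  proof -
    have "(\<lambda>n. c n * exp (t+s) ^ n) sums Sser c (t+s)" unfolding Sser_def using sc by (rule summable_sums)
    hence "(\<lambda>n. c n * exp (t+s) ^ n * (exp (-(s*A)) / H0)) sums (Sser c (t+s) * (exp (-(s*A)) / H0))"
      by (rule sums_mult2)
    moreover have "c n * exp (t+s) ^ n * (exp (-(s*A)) / H0) = p n * exp (s * (real n - A))" for n
    proof -
      have "exp (s * (real n - A)) = exp (s * real n) * exp (-(s*A))"
        by (simp add: exp_add[symmetric] algebra_simps)
      also have "exp (s * real n) = exp s ^ n" by (rule exp_of_nat2_mult)
      finally show ?thesis by (simp add: p_def E_def exp_add power_mult_distrib)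
    qed
    ultimately show ?thesis by simp
  qed
  define \<sigma> where "\<sigma> = sqrt B"
  have sp: "\<sigma> > 0" using Bpos \<sigma>_def by simp
  have sB: "\<sigma>^2 = B" using Bpos \<sigma>_def by simp
  define x where "x = (\<lambda>n. (real n - A) / \<sigma>)"
  have Ep: "(\<lambda>n. p n * exp (x n)) sums (Sser c (t + 1/\<sigma>) / H0 * exp (-((1/\<sigma>)*A)))"
    using PM[of "1/\<sigma>"] by (simp add: x_def)
  have Em: "(\<lambda>n. p n * exp (- x n)) sums (Sser c (t + -1/\<sigma>) / H0 * exp (-((-1/\<sigma>)*A)))"
    using PM[of "-1/\<sigma>"] by (simp add: x_def)
  have Epb: "Sser c (t + 1/\<sigma>) / H0 * exp (-((1/\<sigma>)*A)) \<le> exp 64"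
    using mgf[of "1/\<sigma>"] sp H0_def \<sigma>_def by simp
  have Emb: "Sser c (t + -1/\<sigma>) / H0 * exp (-((-1/\<sigma>)*A)) \<le> exp 64"
    using mgf[of "-1/\<sigma>"] sp H0_def \<sigma>_def by simp
  have ptw: "p n * exp \<bar>x n\<bar> \<le> p n * exp (x n) + p n * exp (- x n)" for n
  proof -
    have "exp \<bar>x n\<bar> \<le> exp (x n) + exp (- x n)" by (cases "x n \<ge> 0") auto
    thus ?thesis using pnn[of n] by (simp add: distrib_left[symmetric] mult_left_mono)
  qed
  have sEpm: "summable (\<lambda>n. p n * exp (x n) + p n * exp (- x n))"
    using Ep Em by (intro summable_add sums_summable) 
  have sEa: "summable (\<lambda>n. p n * exp \<bar>x n\<bar>)"
    by (rule summable_comparison_test[OF _ sEpm]) (use ptw pnn in auto)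
  have Eab: "(\<Sum>n. p n * exp \<bar>x n\<bar>) \<le> 2 * exp 64"
  proof -
    have "(\<Sum>n. p n * exp \<bar>x n\<bar>) \<le> (\<Sum>n. p n * exp (x n) + p n * exp (- x n))"
      by (rule suminf_le[OF ptw sEa sEpm])
    also have "\<dots> = (\<Sum>n. p n * exp (x n)) + (\<Sum>n. p n * exp (- x n))"
      using Ep Em by (intro suminf_add[symmetric] sums_summable)
    also have "\<dots> \<le> exp 64 + exp 64" using Ep Em Epb Emb sums_unique by (metis add_mono)
    finally show ?thesis by simp
  qed
  define Gcs where "Gcs = (\<lambda>s::complex. \<Sum>n. complex_of_real (c n) * exp s ^ n)"
  define \<phi> where "\<phi> = (\<lambda>w. Gcs (of_real t + w) / of_real H0 * exp (-(w * of_real A)))"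
  have Gt: "Gcs (of_real t) = of_real H0"
  proof -
    have "(\<lambda>n. complex_of_real (c n * E^n)) sums of_real H0" by (rule sums_of_real[OF s0])
    hence "(\<lambda>n. complex_of_real (c n) * exp (of_real t) ^ n) sums of_real H0"
      by (simp add: E_def exp_of_real)
    thus ?thesis unfolding Gcs_def by (simp add: sums_iff)
  qed
  have PC: "(\<lambda>n. complex_of_real (p n) * exp (w * (of_nat n - of_real A))) sums \<phi> w" for w
  proof -
    have "(\<lambda>n. complex_of_real (c n) * exp (of_real t + w) ^ n) sums Gcs (of_real t + w)"
      unfolding Gcs_def using scc by (rule summable_sums)
    hence "(\<lambda>n. complex_of_real (c n) * exp (of_real t + w) ^ n * (exp (-(w * of_real A)) / of_real H0))
        sums (Gcs (of_real t + w) * (exp (-(w * of_real A)) / of_real H0))"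
      by (rule sums_mult2)
    moreover have "complex_of_real (c n) * exp (of_real t + w) ^ n * (exp (-(w * of_real A)) / of_real H0)
       = complex_of_real (p n) * exp (w * (of_nat n - of_real A))" for n
    proof -
      have "exp (w * (of_nat n - of_real A)) = exp (w * of_nat n) * exp (-(w * of_real A))"
        by (simp add: exp_add[symmetric] algebra_simps)
      also have "exp (w * of_nat n) = exp w ^ n" by (rule exp_of_nat2_mult)
      finally show ?thesis by (simp add: p_def E_def exp_add power_mult_distrib exp_of_real)
    qed
    ultimately show ?thesis by (simp add: \<phi>_def)
  qed
  have C0: "C \<ge> 0" using Cdef by simp
  have ERR: "norm (\<phi> w - 1 - w^2 * of_real B / 2) \<le> C * \<eta> * ((cmod w)^2 * B)"
    if wb: "cmod w \<le> \<eta> / \<sigma>" for w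
  proof -
    define u where "u = cmod w * \<sigma>"
    have u0: "0 \<le> u" using sp by (simp add: u_def)
    have ue: "u \<le> \<eta>" using wb sp by (simp add: u_def field_simps)
    define z where "z = (\<lambda>n. w * (of_nat n - of_real A :: complex))"
    have S1: "(\<lambda>n. complex_of_real (p n)) sums 1" using sums_of_real[OF P0] by simp
    have S2: "(\<lambda>n. w * complex_of_real (p n * (real n - A))) sums (w * 0)"
    proof -
      have "(\<lambda>n. complex_of_real (p n * (real n - A))) sums 0" using sums_of_real[OF PZ] by simp
      thus ?thesis by (rule sums_mult)
    qed
    have S3: "(\<lambda>n. (w^2/2) * complex_of_real (p n * (real n - A)^2)) sums ((w^2/2) * of_real B)"
      by (intro sums_mult sums_of_real[OF PV])
    have "(\<lambda>n. complex_of_real (p n) * exp (z n) - complex_of_real (p n)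
        - w * complex_of_real (p n * (real n - A)) - (w^2/2) * complex_of_real (p n * (real n - A)^2))
        sums (\<phi> w - 1 - w * 0 - (w^2/2) * of_real B)"
      using PC[of w] S1 S2 S3 unfolding z_def by (intro sums_diff) auto
    moreover have "(\<lambda>n. complex_of_real (p n) * exp (z n) - complex_of_real (p n)
        - w * complex_of_real (p n * (real n - A)) - (w^2/2) * complex_of_real (p n * (real n - A)^2))
       = (\<lambda>n. complex_of_real (p n) * (exp (z n) - 1 - z n - (z n)^2/2))"
      by (simp add: z_def fun_eq_iff power2_eq_square field_simps)
    ultimately have ER: "(\<lambda>n. complex_of_real (p n) * (exp (z n) - 1 - z n - (z n)^2/2))
        sums (\<phi> w - 1 - w^2 * of_real B / 2)" by simp
    define g where "g = (\<lambda>n. (\<eta> * u^2 * 216) * (p n * exp \<bar>x n\<bar>))"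
    have gs: "summable g" unfolding g_def using sEa by (rule summable_mult)
    have gb: "norm (complex_of_real (p n) * (exp (z n) - 1 - z n - (z n)^2/2)) \<le> g n" for n
    proof -
      have nz: "cmod (z n) = u * \<bar>x n\<bar>"
      proof -
        have "(of_nat n - of_real A :: complex) = of_real (real n - A)" by simp
        hence "cmod (of_nat n - of_real A :: complex) = \<bar>real n - A\<bar>" by (simp only: norm_of_real)
        hence "cmod (z n) = cmod w * \<bar>real n - A\<bar>" unfolding z_def by (simp only: norm_mult)
        also have "\<bar>real n - A\<bar> = \<sigma> * \<bar>x n\<bar>" using sp by (simp add: x_def abs_divide)
        finally show ?thesis by (simp add: u_def)
      qed
      have "norm (complex_of_real (p n) * (exp (z n) - 1 - z n - (z n)^2/2))
          = p n * norm (exp (z n) - 1 - z n - (z n)^2/2)" using pnn[of n] by (simp add: norm_mult)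
      also have "\<dots> \<le> p n * ((u * \<bar>x n\<bar>)^3 * exp (u * \<bar>x n\<bar>))"
        using exp_taylor3[of "z n"] pnn[of n] nz by (intro mult_left_mono) auto
      also have "\<dots> \<le> p n * (\<eta> * u^2 * (216 * exp \<bar>x n\<bar>))"
        using cubic_bound[OF u0 ue eta(2), of "\<bar>x n\<bar>"] pnn[of n] by (intro mult_left_mono) auto
      also have "\<dots> = g n" by (simp add: g_def)
      finally show ?thesis .
    qed
    have "norm (\<phi> w - 1 - w^2 * of_real B / 2) \<le> suminf g"
      using norm_suminf_le[OF gb gs] sums_unique[OF ER] by simp
    also have "suminf g = (\<eta> * u^2 * 216) * (\<Sum>n. p n * exp \<bar>x n\<bar>)"
      unfolding g_def using sEa by (rule suminf_mult)
    also have "\<dots> \<le> (\<eta> * u^2 * 216) * (2 * exp 64)"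
      using Eab eta u0 by (intro mult_left_mono) auto
    also have "\<dots> = C * \<eta> * ((cmod w)^2 * B)"
    proof -
      have "u^2 = (cmod w)^2 * B" using sB by (simp add: u_def power_mult_distrib)
      thus ?thesis using Cdef by (simp add: algebra_simps)
    qed
    finally show ?thesis .
  qed
  define L where "L = (\<lambda>w. w * of_real A + ln (\<phi> w))"
  have rsig: "\<eta> / sqrt B = \<eta> / \<sigma>" by (simp add: \<sigma>_def)
  have V: "norm (\<phi> w - 1) \<le> 1/4 \<and> norm (ln (\<phi> w) - w^2 * of_real B / 2) \<le> (C+1) * \<eta> * ((cmod w)^2 * B)"
    if wb: "cmod w \<le> \<eta> / \<sigma>" for w
  proof -
    have q0: "0 \<le> (cmod w)^2 * B" using Bpos by simp
    have "cmod w * \<sigma> \<le> \<eta>" using wb sp by (simp add: field_simps)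
    hence "(cmod w * \<sigma>)^2 \<le> \<eta>^2" using sp by (intro power_mono) auto
    hence qe: "(cmod w)^2 * B \<le> \<eta>^2" using sB by (simp add: power_mult_distrib)
    have nD: "norm (w^2 * of_real B / 2) = (cmod w)^2 * B / 2" using Bpos by (simp add: norm_mult norm_power norm_divide)
    have fa: "norm (ln (1 + (\<phi> w - 1)) - w^2 * of_real B / 2) \<le> (C+1) * \<eta> * ((cmod w)^2 * B)"
         "norm (\<phi> w - 1) \<le> 1/4"
      using final_alg[OF refl nD ERR[OF wb] q0 qe eta(1,2,3) C0] by auto
    thus ?thesis by simp
  qed
  have ne: "\<phi> w \<notin> \<real>\<^sub>\<le>\<^sub>0" "\<phi> w \<noteq> 0" if wb: "cmod w \<le> \<eta> / \<sigma>" for w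
  proof -
    have "norm (\<phi> w - 1) \<le> 1/4" using V[OF wb] by simp
    hence "\<bar>Re (\<phi> w - 1)\<bar> \<le> 1/4" using abs_Re_le_cmod order_trans by blast
    hence "Re (\<phi> w) > 0" by (simp only: minus_complex.sel one_complex.sel)
    thus "\<phi> w \<notin> \<real>\<^sub>\<le>\<^sub>0" "\<phi> w \<noteq> 0" by (auto simp: complex_nonpos_Reals_iff)
  qed
  have Gh: "(\<lambda>z. \<Sum>n. complex_of_real (c n) * z^n) holomorphic_on UNIV" by (rule G_holo[OF scc])
  have Gch: "(\<lambda>w. Gcs (of_real t + w)) holomorphic_on UNIV"
  proof -
    have "(\<lambda>w. exp (of_real t + w)) holomorphic_on UNIV" by (intro holomorphic_intros)
    from holomorphic_on_compose_gen[OF this Gh] show ?thesis by (simp add: o_def Gcs_def)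
  qed
  have phih: "\<phi> holomorphic_on UNIV" unfolding \<phi>_def using H0p
    by (intro holomorphic_intros Gch) auto
  have "L holomorphic_on cball 0 (\<eta> / sqrt B)"
    unfolding L_def rsig
    by (intro holomorphic_intros holomorphic_on_subset[OF phih]) (auto simp: ne)
  moreover have "L 0 = 0" using Gt H0p by (simp add: L_def \<phi>_def)
  moreover have "\<forall>w \<in> cball 0 (\<eta> / sqrt B).
         exp (L w) = (\<Sum>n. complex_of_real (c n) * exp (complex_of_real t + w) ^ n)
                   / (\<Sum>n. complex_of_real (c n) * exp (complex_of_real t) ^ n) \<and>
         cmod (L w - (w * complex_of_real A + w^2 * complex_of_real B / 2))
           \<le> (C+1) * \<eta> * (cmod w)^2 * B"
  proof
    fix w :: complex assume "w \<in> cball 0 (\<eta> / sqrt B)"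
    hence wb: "cmod w \<le> \<eta> / \<sigma>" using rsig by simp
    have "exp (L w) = exp (w * of_real A) * \<phi> w" using ne(2)[OF wb] by (simp add: L_def exp_add)
    also have "\<dots> = Gcs (of_real t + w) / Gcs (of_real t)"
      using Gt H0p by (simp add: \<phi>_def exp_minus field_simps)
    finally have e: "exp (L w) = Gcs (of_real t + w) / Gcs (of_real t)" .
    have "L w - (w * complex_of_real A + w^2 * complex_of_real B / 2) = ln (\<phi> w) - w^2 * of_real B / 2"
      by (simp add: L_def algebra_simps)
    hence "cmod (L w - (w * complex_of_real A + w^2 * complex_of_real B / 2)) \<le> (C+1) * \<eta> * ((cmod w)^2 * B)"
      using V[OF wb] by (simp only:)
    thus "exp (L w) = (\<Sum>n. complex_of_real (c n) * exp (complex_of_real t + w) ^ n)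
                   / (\<Sum>n. complex_of_real (c n) * exp (complex_of_real t) ^ n) \<and>
         cmod (L w - (w * complex_of_real A + w^2 * complex_of_real B / 2))
           \<le> (C+1) * \<eta> * (cmod w)^2 * B" using e by (simp add: Gcs_def mult.assoc)
  qed
  ultimately show ?thesis by blast
qed


theorem proposition3p9:
  fixes a :: "nat \<Rightarrow> real" and ts :: "nat \<Rightarrow> real"
  assumes nonneg: "\<And>n. a n \<ge> 0"
    and inf_nz: "infinite {n. a n \<noteq> 0}"
    and entire: "\<And>z::complex. summable (\<lambda>n. complex_of_real ((a n)^2) * z ^ n)"
    and B_mono: "mono (Bfun a)"
    and B_unbdd: "\<not> bdd_above (range (Bfun a))"
    and ts_choice: "\<And>l. l \<in> admissible_indices a \<Longrightarrow> Bfun a (ts l) = real l ^ 6"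
  shows "\<forall>\<epsilon>>0. \<exists>\<eta>>0. \<exists>t0. \<forall>t \<in> normal_values a ts. t > t0 \<longrightarrow>
    (\<exists>L. L holomorphic_on cball 0 (\<eta> / sqrt (Bfun a t)) \<and> L 0 = 0 \<and>
      (\<forall>w \<in> cball 0 (\<eta> / sqrt (Bfun a t)).
         exp (L w) = Hc a (complex_of_real t + w) / Hc a (complex_of_real t) \<and>
         cmod (L w - (w * complex_of_real (Afun a t) + w^2 * complex_of_real (Bfun a t) / 2))
           \<le> \<epsilon> * (cmod w)^2 * Bfun a t))"
proof -
  define c where "c = (\<lambda>n. (a n)^2)"
  define c1 where "c1 = (\<lambda>n. real n * c n)"
  define c2 where "c2 = (\<lambda>n. real n * c1 n)"
  have cnn: "\<And>n. c n \<ge> 0" by (simp add: c_def)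
  have scc: "\<And>z::complex. summable (\<lambda>n. complex_of_real (c n) * z^n)" using entire by (simp add: c_def)
  have sc: "\<And>y::real. summable (\<lambda>n. c n * y^n)"
  proof -
    fix y :: real
    have "summable (\<lambda>n. complex_of_real (c n) * complex_of_real y ^ n)" by (rule scc)
    hence "summable (\<lambda>n. complex_of_real (c n * y^n))" by simp
    thus "summable (\<lambda>n. c n * y^n)" by (simp only: summable_complex_of_real)
  qed
  have sc1: "\<And>y::real. summable (\<lambda>n. c1 n * y^n)" unfolding c1_def by (rule summable_nc[OF sc])
  define H0 where "H0 = Sser c"
  define H1 where "H1 = Sser c1"
  define H2 where "H2 = Sser c2"
  have HrH0: "Hr a = H0" by (auto simp: fun_eq_iff Hr_def Gr_def H0_def Sser_def c_def)
  have d0: "(H0 has_real_derivative H1 x) (at x)" for x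
    unfolding H0_def H1_def c1_def by (rule Sser_deriv[OF sc])
  have d1: "(H1 has_real_derivative H2 x) (at x)" for x
    unfolding H1_def H2_def c2_def by (rule Sser_deriv[OF sc1])
  have H0pos: "H0 x > 0" for x
  proof -
    from inf_nz have "{n. a n \<noteq> 0} \<noteq> {}" by (metis finite.emptyI)
    then obtain m where "a m \<noteq> 0" by auto
    hence "0 < c m * exp x ^ m" by (simp add: c_def)
    thus ?thesis unfolding H0_def Sser_def
      by (intro suminf_pos2[OF sc]) (auto simp: cnn)
  qed
  have Aeq: "Afun a = (\<lambda>x. H1 x / H0 x)"
    by (auto simp: fun_eq_iff Afun_def HrH0 DERIV_imp_deriv[OF d0])
  have dA: "(Afun a has_real_derivative (H2 x * H0 x - H1 x * H1 x) / (H0 x * H0 x)) (at x)" for x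
    unfolding Aeq using H0pos[of x] by (intro DERIV_divide d0 d1) auto
  have Beq: "Bfun a x = H2 x / H0 x - (Afun a x)^2" for x
  proof -
    have "Bfun a x = (H2 x * H0 x - H1 x * H1 x) / (H0 x * H0 x)"
      unfolding Bfun_def by (rule DERIV_imp_deriv[OF dA])
    thus ?thesis using H0pos[of x] by (simp add: Aeq field_simps power2_eq_square)
  qed
  have dAB: "(Afun a has_real_derivative Bfun a y) (at y)" for y
  proof -
    have "Bfun a y = (H2 y * H0 y - H1 y * H1 y) / (H0 y * H0 y)"
      unfolding Bfun_def by (rule DERIV_imp_deriv[OF dA])
    thus ?thesis using dA[of y] by simp
  qed
  have HcEq: "Hc a s = (\<Sum>n. complex_of_real (c n) * exp s ^ n)" for s
    by (simp add: Hc_def Gc_def c_def)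
  show ?thesis
  proof (intro allI impI)
    fix \<epsilon> :: real assume \<epsilon>p: "\<epsilon> > 0"
    define C where "C = 432 * exp (64::real)"
    have Cp: "C > 0" by (simp add: C_def)
    define \<eta> where "\<eta> = min (1/2) (min (1/(2*C)) (\<epsilon>/(C+1)))"
    have \<eta>p: "\<eta> > 0" using Cp \<epsilon>p by (simp add: \<eta>_def)
    have \<eta>2: "\<eta> \<le> 1/2" unfolding \<eta>_def by (rule min.cobounded1)
    have \<eta>C: "C * \<eta> \<le> 1/2"
    proof -
      have "\<eta> \<le> 1/(2*C)" unfolding \<eta>_def by linarith
      hence "C * \<eta> \<le> C * (1/(2*C))" using Cp by (intro mult_left_mono) auto
      thus ?thesis using Cp by simp
    qed
    have \<eta>e: "(C+1) * \<eta> \<le> \<epsilon>"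
    proof -
      have "\<eta> \<le> \<epsilon>/(C+1)" unfolding \<eta>_def by linarith
      hence "(C+1) * \<eta> \<le> (C+1) * (\<epsilon>/(C+1))" using Cp by (intro mult_left_mono) auto
      thus ?thesis using Cp by simp
    qed
    have main: "\<exists>L. L holomorphic_on cball 0 (\<eta> / sqrt (Bfun a t)) \<and> L 0 = 0 \<and>
      (\<forall>w \<in> cball 0 (\<eta> / sqrt (Bfun a t)).
         exp (L w) = Hc a (complex_of_real t + w) / Hc a (complex_of_real t) \<and>
         cmod (L w - (w * complex_of_real (Afun a t) + w^2 * complex_of_real (Bfun a t) / 2))
           \<le> \<epsilon> * (cmod w)^2 * Bfun a t)" if tN: "t \<in> normal_values a ts" for t
    proof -
      from tN obtain l where l: "l \<in> admissible_indices a" "Suc l \<in> admissible_indices a"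
        "ts l + 2/(real l)^2 \<le> t" "t \<le> ts (Suc l) - 2/(real l)^2"
        unfolding normal_values_def by auto
      have l1: "l \<ge> 1" using l(1) by (simp add: admissible_indices_def)
      have Bl: "Bfun a (ts l) = real l^6" using ts_choice[OF l(1)] .
      have Bl1: "Bfun a (ts (Suc l)) = real (Suc l)^6" using ts_choice[OF l(2)] .
      define B where "B = Bfun a t"
      have "ts l \<le> t" using l(3) by (smt (verit) divide_nonneg_nonneg zero_le_power2)
      hence Bge: "real l^6 \<le> B" using B_mono Bl unfolding B_def by (metis monoD)
      have "1 \<le> real l^6" using l1 by simp
      hence B1: "B \<ge> 1" using Bge by linarith
      have sqB: "real l^3 \<le> sqrt B"
      proof -
        have "sqrt (real l^6) \<le> sqrt B" using Bge by (rule real_sqrt_le_mono)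
        moreover have "sqrt (real l^6) = real l^3"
          by (metis power2_eq_square power_mult_distrib real_sqrt_abs abs_of_nonneg of_nat_0_le_iff zero_le_power
              numeral_times_numeral semiring_norm(12) power_mult num_double)
        ultimately show ?thesis by simp
      qed
      have mgf: "Sser c (t+s) / Sser c t * exp (-(s * Afun a t)) \<le> exp 64" if sb: "\<bar>s\<bar> \<le> 1 / sqrt B" for s
      proof -
        define F where "F = (\<lambda>x. ln (H0 (t + x)))"
        define F1 where "F1 = (\<lambda>x. Afun a (t + x))"
        define F2 where "F2 = (\<lambda>x. Bfun a (t + x))"
        have dF: "(F has_real_derivative F1 x) (at x)" for x
        proof -
          have dt: "((\<lambda>x. t + x) has_real_derivative 1) (at x)" by (auto intro!: derivative_eq_intros)
          have "((\<lambda>x. H0 (t + x)) has_real_derivative H1 (t + x) * 1) (at x)"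
            by (rule DERIV_chain2[OF d0 dt])
          from DERIV_chain2[OF DERIV_ln[OF H0pos[of "t+x"]] this]
          have "(F has_real_derivative inverse (H0 (t+x)) * (H1 (t + x) * 1)) (at x)" by (simp add: F_def)
          moreover have "inverse (H0 (t+x)) * (H1 (t + x) * 1) = F1 x" by (simp add: F1_def Aeq field_simps)
          ultimately show ?thesis by simp
        qed
        have dF1: "(F1 has_real_derivative F2 x) (at x)" for x
        proof -
          have dt: "((\<lambda>x. t + x) has_real_derivative 1) (at x)" by (auto intro!: derivative_eq_intros)
          from DERIV_chain2[OF dAB dt] show ?thesis by (simp add: F1_def F2_def)
        qed
        have sqBp: "sqrt B > 0" using B1 by simp
        have l3: "1 / sqrt B \<le> 2 / (real l)^2"
        proof -
          have "1 / sqrt B \<le> 1 / real l^3" using sqB l1 sqBp by (intro divide_left_mono mult_pos_pos) auto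
          also have "\<dots> \<le> 2 / (real l)^2" using l1 by (simp add: field_simps power3_eq_cube power2_eq_square)
          finally show ?thesis .
        qed
        have M: "F2 x \<le> 64 * B" if "min 0 s \<le> x" "x \<le> max 0 s" for x
        proof -
          have "t + x \<le> ts (Suc l)" using that sb l3 l(4) by (auto simp: min_def max_def split: if_splits)
          hence "F2 x \<le> Bfun a (ts (Suc l))" unfolding F2_def using B_mono by (metis monoD)
          also have "\<dots> = (real l + 1)^6" using Bl1 by (simp add: add.commute)
          also have "\<dots> \<le> (2 * real l)^6" using l1 by (intro power_mono) auto
          also have "\<dots> = 64 * real l^6" by (simp add: power_mult_distrib)
          also have "\<dots> \<le> 64 * B" using Bge by simp
          finally show ?thesis .
        qed
        have T: "F s - F 0 - s * F1 0 \<le> 64 * B * s^2"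
          by (rule taylor2_le[OF dF dF1 M]) (use B1 in auto)
        have "s^2 \<le> (1 / sqrt B)^2" using sb by (metis abs_ge_zero power2_abs power_mono)
        also have "\<dots> = 1 / B" using B1 by (simp add: power_divide)
        finally have "64 * B * s^2 \<le> 64 * B * (1/B)" using B1 by (intro mult_left_mono) auto
        hence le: "F s - F 0 - s * F1 0 \<le> 64" using T B1 by simp
        have "exp (F s - F 0 - s * F1 0) = Sser c (t+s) / Sser c t * exp (-(s * Afun a t))"
          using H0pos[of "t+s"] H0pos[of t] by (simp add: F_def F1_def H0_def exp_diff exp_minus exp_add field_simps)
        moreover have "exp (F s - F 0 - s * F1 0) \<le> exp 64" using le by simp
        ultimately show ?thesis by simp
      qed
      have A_eq: "Afun a t = Sser (\<lambda>n. real n * c n) t / Sser c t" by (simp add: Aeq H1_def H0_def c1_def)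
      have B_eq: "B = Sser (\<lambda>n. real n * (real n * c n)) t / Sser c t - (Afun a t)^2"
        by (simp add: B_def Beq H2_def H0_def c1_def c2_def)
      obtain L where L: "L holomorphic_on cball 0 (\<eta> / sqrt B)" "L 0 = 0"
        "\<forall>w \<in> cball 0 (\<eta> / sqrt B).
         exp (L w) = (\<Sum>n. complex_of_real (c n) * exp (complex_of_real t + w) ^ n)
                   / (\<Sum>n. complex_of_real (c n) * exp (complex_of_real t) ^ n) \<and>
         cmod (L w - (w * complex_of_real (Afun a t) + w^2 * complex_of_real B / 2))
           \<le> (C+1) * \<eta> * (cmod w)^2 * B"
        using local_est[OF cnn sc scc _ A_eq B_eq _ mgf C_def \<eta>p \<eta>2 \<eta>C] H0pos[of t] B1
        unfolding H0_def by auto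
      show "\<exists>L. L holomorphic_on cball 0 (\<eta> / sqrt (Bfun a t)) \<and> L 0 = 0 \<and>
      (\<forall>w \<in> cball 0 (\<eta> / sqrt (Bfun a t)).
         exp (L w) = Hc a (complex_of_real t + w) / Hc a (complex_of_real t) \<and>
         cmod (L w - (w * complex_of_real (Afun a t) + w^2 * complex_of_real (Bfun a t) / 2))
           \<le> \<epsilon> * (cmod w)^2 * Bfun a t)"
      proof -
        have h1: "L holomorphic_on cball 0 (\<eta> / sqrt (Bfun a t))" using L(1) by (simp add: B_def)
        have h2: "\<forall>w \<in> cball 0 (\<eta> / sqrt (Bfun a t)).
         exp (L w) = Hc a (complex_of_real t + w) / Hc a (complex_of_real t) \<and>
         cmod (L w - (w * complex_of_real (Afun a t) + w^2 * complex_of_real (Bfun a t) / 2))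
           \<le> \<epsilon> * (cmod w)^2 * Bfun a t"
        proof
          fix w :: complex assume "w \<in> cball 0 (\<eta> / sqrt (Bfun a t))"
          hence w: "w \<in> cball 0 (\<eta> / sqrt B)" by (simp add: B_def)
          have e1: "exp (L w) = Hc a (complex_of_real t + w) / Hc a (complex_of_real t)"
            using L(3) w by (simp add: HcEq)
          have "cmod (L w - (w * complex_of_real (Afun a t) + w^2 * complex_of_real B / 2))
             \<le> (C+1) * \<eta> * (cmod w)^2 * B" using L(3) w by simp
          also have "\<dots> \<le> \<epsilon> * (cmod w)^2 * B"
            using \<eta>e B1 by (intro mult_right_mono) auto
          finally have e2: "cmod (L w - (w * complex_of_real (Afun a t) + w^2 * complex_of_real (Bfun a t) / 2))
             \<le> \<epsilon> * (cmod w)^2 * Bfun a t" by (simp add: B_def)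
          show "exp (L w) = Hc a (complex_of_real t + w) / Hc a (complex_of_real t) \<and>
         cmod (L w - (w * complex_of_real (Afun a t) + w^2 * complex_of_real (Bfun a t) / 2))
           \<le> \<epsilon> * (cmod w)^2 * Bfun a t" using e1 e2 by blast
        qed
        show ?thesis using h1 h2 L(2) by blast
      qed
    qed
    show "\<exists>\<eta>>0. \<exists>t0. \<forall>t \<in> normal_values a ts. t > t0 \<longrightarrow>
    (\<exists>L. L holomorphic_on cball 0 (\<eta> / sqrt (Bfun a t)) \<and> L 0 = 0 \<and>
      (\<forall>w \<in> cball 0 (\<eta> / sqrt (Bfun a t)).
         exp (L w) = Hc a (complex_of_real t + w) / Hc a (complex_of_real t) \<and>
         cmod (L w - (w * complex_of_real (Afun a t) + w^2 * complex_of_real (Bfun a t) / 2))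
           \<le> \<epsilon> * (cmod w)^2 * Bfun a t))"
      using \<eta>p main by blast
  qed
qed
end
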